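(* Let $\mathcal D$ be a simply connected hyperbolic Riemann surface with boundary $\partial\mathcal D$, let $a\in\partial\mathcal D$, and let $\psi^{\mathbb H}:\mathcal D\to\mathbb H=\{\Im z>0\}$ be a chart with $\psi^{\mathbb H}(a)=0$. A semicomplete vector field $\delta$ on $\mathcal D$ is holomorphic in $\mathcal D$ and tangent to the boundary at every boundary point except $a$ if and only if $$\delta=\delta_{-2}\ell_{-2}+\delta_{-1}\ell_{-1}+\delta_0\ell_0+\delta_1\ell_1,\qquad \delta_{-1},\delta_0,\delta_1\in\mathbb R,\ \delta_{-2}\le 0,$$ i.e. $\delta^{\mathbb H}(z)=\frac{\delta_{-2}}{z}+\delta_{-1}+\delta_0z+\delta_1z^2$ in the half-plane chart.
   Context: A chart is a conformal map $\psi:\mathcal D\to D^\psi\subset\mathbb C$. A holomorphic vector field $v$ is a family of holomorphic functions $v^\psi$ on $D^\psi$, one for each chart, with $v^{\tilde\psi}(z)=v^\psi(\tau(z))/\tau'(z)$, $\tau=\psi\circ\tilde\psi^{-1}$. $\ell_n$ denotes the vector field with $\ell_n^{\mathbb H}(z)=z^{n+1}$ in the half-plane chart $\psi^{\mathbb H}$ (with $\psi^{\mathbb H}(a)=0$). For a vector field $v$, $H_t[v]$ is the solution of $\frac{d}{dt}H_t[v]=v\circ H_t[v]$, $H_0[v]=\mathrm{id}$. A holomorphic vector field $\delta$ is semicomplete if $H_t[\delta]$ exists for all $t\in[0,\infty)$ as a conformal map $\mathcal D\to\mathcal D\setminus K_t$ for some subsets $K_t\subset\mathcal D$ (i.e.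 a one-parameter semigroup of conformal self-maps of $\mathcal D$). *)

theory Defs
  imports "HOL-Complex_Analysis.Complex_Analysis"
begin

text \<open>Everything is expressed in the half-plane chart psi^H, which maps D
conformally onto the upper half-plane with the boundary point a sent to 0.
A holomorphic vector field v on D is then represented by its chart
function v^H, a holomorphic function on the upper half-plane.\<close>

definition upper_half :: "complex set" where
  "upper_half = {z. Im z > 0}"

definition ell :: "int \<Rightarrow> complex \<Rightarrow> complex" where
  "ell n z = z powi (n + 1)"

definition semicomplete_H :: "(complex \<Rightarrow> complex) \<Rightarrow> bool" where
  "semicomplete_H v \<longleftrightarrow>
     (\<exists>F :: real \<Rightarrow> complex \<Rightarrow> complex.
        (\<forall>z\<in>upper_half. F 0 z = z \<and>
           (\<forall>t\<ge>0. ((\<lambda>s. F s z) has_vector_derivative v (F t z)) (at t within {0..}))) \<and>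
        (\<forall>t\<ge>0. F t holomorphic_on upper_half \<and> inj_on (F t) upper_half \<and>
                F t ` upper_half \<subseteq> upper_half))"

text \<open>In the half-plane chart the boundary of D is the real line together
with the point at infinity, and a corresponds to 0.  At finite boundary points:
v^H extends holomorphically to an open neighbourhood of the closed half-plane
minus 0 and is real on the real axis (tangency).  At infinity we use the chart
w = -1/z, in which the field reads w^2 * v^H(-1/w); it must extend
holomorphically across w = 0 and be real on the real axis there.\<close>
definition holo_tangent_except_0 :: "(complex \<Rightarrow> complex) \<Rightarrow> bool" where
  "holo_tangent_except_0 v \<longleftrightarrow>
     (\<exists>U f. open U \<and> {z. Im z \<ge> 0} - {0} \<subseteq> U \<and> f holomorphic_on U \<and>
        (\<forall>z\<in>upper_half. f z = v z) \<and>
        (\<forall>x::real. x \<noteq> 0 \<longrightarrow> f (complex_of_real x) \<in> \<real>)) \<and>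
     (\<exists>r>0. \<exists>h. h holomorphic_on ball 0 r \<and>
        (\<forall>w\<in>ball 0 r. Im w > 0 \<longrightarrow> h w = w\<^sup>2 * v (- 1 / w)) \<and>
        (\<forall>x::real. \<bar>x\<bar> < r \<longrightarrow> h (complex_of_real x) \<in> \<real>))"

end

theory Submission
  imports Defs
begin


lemma normsq_diff_cnj:
  fixes a b :: complex
  shows "(cmod (b - a))^2 = (cmod (b - cnj a))^2 - 4 * Im a * Im b"
  unfolding cmod_power2 by (simp add: power2_eq_square algebra_simps)

lemma Im_Mi:
  fixes a u :: complex
  assumes "cmod u < 1"
  shows "Im ((a - cnj a * u) / (1 - u)) = Im a * (1 - (cmod u)^2) / (cmod (1 - u))^2"
proof -
  have "u \<noteq> 1" using assms by auto
  then have ne: "(1 - Re u)^2 + (Im u)^2 \<noteq> 0"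
    by (auto simp: complex_eq_iff sum_power2_eq_zero_iff)
  show ?thesis
    unfolding cmod_power2 using ne
    by (simp add: Im_divide field_simps power2_eq_square algebra_simps)
qed

lemma Mi_in_H:
  assumes "a \<in> upper_half" "cmod u < 1"
  shows "(a - cnj a * u) / (1 - u) \<in> upper_half"
proof -
  have "u \<noteq> 1" using assms by auto
  then have "cmod (1 - u) > 0" by simp
  moreover have "(cmod u)^2 < 1" using assms(2) norm_ge_zero
    by (metis abs_norm_cancel abs_square_less_1)
  ultimately show ?thesis using assms Im_Mi[OF assms(2), of a]
    by (simp add: upper_half_def)
qed

lemma M_Mi:
  assumes "a \<in> upper_half" and that: "z \<in> upper_half"
  shows "(a - cnj a * ((z - a) / (z - cnj a))) / (1 - (z - a) / (z - cnj a)) = z"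
proof -
  have "Im (z - cnj a) > 0" "Im (a - cnj a) > 0" using assms that by (auto simp: upper_half_def)
  moreover have "\<And>x::complex. Im x > 0 \<Longrightarrow> x \<noteq> 0" by auto
  ultimately have ne: "z - cnj a \<noteq> 0" and ne2: "a - cnj a \<noteq> 0" by blast+
  have d: "1 - (z - a) / (z - cnj a) = (a - cnj a) / (z - cnj a)"
    using ne by (simp add: field_simps)
  have n: "a - cnj a * ((z - a) / (z - cnj a)) = z * (a - cnj a) / (z - cnj a)"
    using ne by (simp add: field_simps)
  have e: "z * (a - cnj a) / (z - cnj a) / ((a - cnj a) / (z - cnj a)) = z"
    using ne ne2 by simp
  show ?thesis unfolding n d by (rule e)
qed

lemma M_lt1:
  assumes "a \<in> upper_half" "b \<in> upper_half"
  shows "cmod ((b - a) / (b - cnj a)) < 1"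
proof -
  have p: "Im a > 0" "Im b > 0" using assms by (auto simp: upper_half_def)
  have "Im (b - cnj a) > 0" using p by simp
  then have ne: "b - cnj a \<noteq> 0" by auto
  have "(cmod (b - a))^2 < (cmod (b - cnj a))^2"
    using normsq_diff_cnj[of b a] p by (simp add: mult_pos_pos)
  then have "cmod (b - a) < cmod (b - cnj a)"
    using norm_ge_zero power2_less_imp_less by blast
  then show ?thesis using ne by (simp add: norm_divide divide_less_eq)
qed

lemma schwarz_pick_H:
  assumes holf: "f holomorphic_on upper_half" and fH: "f ` upper_half \<subseteq> upper_half"
    and z: "z \<in> upper_half" and w: "w \<in> upper_half"
  shows "Im z * Im w * (cmod (f z - cnj (f w)))^2 \<le> Im (f z) * Im (f w) * (cmod (z - cnj w))^2"
proof -
  define Mi where "Mi u = (w - cnj w * u) / (1 - u)" for u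
  define g where "g u = (f (Mi u) - f w) / (f (Mi u) - cnj (f w))" for u
  have fwH: "f w \<in> upper_half" "f z \<in> upper_half" using fH w z by auto
  have MiH: "Mi u \<in> upper_half" if "u \<in> ball 0 1" for u
    using Mi_in_H[OF w] that by (simp add: Mi_def)
  have holMi: "Mi holomorphic_on ball 0 1"
    unfolding Mi_def by (intro holomorphic_intros) auto
  have holfMi: "(f \<circ> Mi) holomorphic_on ball 0 1"
    by (rule holomorphic_on_compose_gen[OF holMi holf]) (use MiH in auto)
  have nz: "f (Mi u) - cnj (f w) \<noteq> 0" if "u \<in> ball 0 1" for u
  proof -
    have "Im (f (Mi u) - cnj (f w)) > 0" using fH MiH[OF that] fwH by (auto simp: upper_half_def)
    then show ?thesis by auto
  qed
  have holg: "g holomorphic_on ball 0 1"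
    unfolding g_def using holfMi nz
    by (intro holomorphic_intros) (auto simp: o_def)
  have Mi0: "Mi 0 = w" by (simp add: Mi_def)
  have g0: "g 0 = 0" by (simp add: g_def Mi0)
  have gl: "cmod (g u) < 1" if "cmod u < 1" for u
    unfolding g_def using M_lt1[OF fwH(1)] fH MiH that by auto
  define xi where "xi = (z - w) / (z - cnj w)"
  have xi: "cmod xi < 1" unfolding xi_def by (rule M_lt1[OF w z])
  have Mixi: "Mi xi = z" unfolding Mi_def xi_def by (rule M_Mi[OF w z])
  have "cmod (g xi) \<le> cmod xi"
    by (rule Schwarz_Lemma(1)[OF holg g0 gl xi])
  moreover have "g xi = (f z - f w) / (f z - cnj (f w))" by (simp add: g_def Mixi)
  ultimately have le: "cmod ((f z - f w) / (f z - cnj (f w))) \<le> cmod ((z - w) / (z - cnj w))"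
    by (simp add: xi_def)
  have p: "Im z > 0" "Im w > 0" "Im (f z) > 0" "Im (f w) > 0" using z w fwH by (auto simp: upper_half_def)
  have "Im (z - cnj w) > 0" "Im (f z - cnj (f w)) > 0" using p by auto
  moreover have "\<And>x::complex. Im x > 0 \<Longrightarrow> cmod x > 0" by auto
  ultimately have n1: "cmod (z - cnj w) > 0" and n2: "cmod (f z - cnj (f w)) > 0" by blast+
  from le have "cmod (f z - f w) * cmod (z - cnj w) \<le> cmod (z - w) * cmod (f z - cnj (f w))"
    using n1 n2 by (simp add: norm_divide divide_simps)
  then have "(cmod (f z - f w) * cmod (z - cnj w))^2 \<le> (cmod (z - w) * cmod (f z - cnj (f w)))^2"
    by (simp add: power_mono)
  then have "((cmod (f z - cnj (f w)))^2 - 4 * Im (f w) * Im (f z)) * (cmod (z - cnj w))^2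
      \<le> ((cmod (z - cnj w))^2 - 4 * Im w * Im z) * (cmod (f z - cnj (f w)))^2"
    unfolding power_mult_distrib normsq_diff_cnj[of "f z" "f w"] normsq_diff_cnj[of z w] .
  then show ?thesis by (simp add: algebra_simps)
qed



lemma deriv_nonneg_right:
  fixes f :: "real \<Rightarrow> real"
  assumes d: "(f has_real_derivative D) (at 0 within {0..})" and f0: "f 0 = 0"
    and nn: "\<And>t. t \<ge> 0 \<Longrightarrow> f t \<ge> 0"
  shows "D \<ge> 0"
proof -
  have lim: "((\<lambda>y. (f y - f 0) / (y - 0)) \<longlongrightarrow> D) (at_right 0)"
    using d unfolding has_field_derivative_iff at_within_Ici_at_right .
  have ev: "eventually (\<lambda>y. 0 \<le> (f y - f 0) / (y - 0)) (at_right 0)"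
    using nn f0 by (auto simp: eventually_at_filter)
  show ?thesis by (rule tendsto_lowerbound[OF lim ev]) simp
qed

lemma Re_vd: "((\<lambda>t. a t) has_vector_derivative A) F \<Longrightarrow> ((\<lambda>t. Re (a t)) has_real_derivative Re A) F"
  unfolding has_real_derivative_iff_has_vector_derivative
  by (rule bounded_linear.has_vector_derivative[OF bounded_linear_Re])

lemma Im_vd: "((\<lambda>t. a t) has_vector_derivative A) F \<Longrightarrow> ((\<lambda>t. Im (a t)) has_real_derivative Im A) F"
  unfolding has_real_derivative_iff_has_vector_derivative
  by (rule bounded_linear.has_vector_derivative[OF bounded_linear_Im])

lemma generator_ineq:
  fixes \<phi> :: "real \<Rightarrow> complex \<Rightarrow> complex" and G :: "complex \<Rightarrow> complex"
  assumes hol: "\<And>t. t \<ge> 0 \<Longrightarrow> \<phi> t holomorphic_on upper_half"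
    and into: "\<And>t. t \<ge> 0 \<Longrightarrow> \<phi> t ` upper_half \<subseteq> upper_half"
    and init: "\<And>z. z \<in> upper_half \<Longrightarrow> \<phi> 0 z = z"
    and der: "\<And>z. z \<in> upper_half \<Longrightarrow> ((\<lambda>t. \<phi> t z) has_vector_derivative G z) (at 0 within {0..})"
    and z: "z \<in> upper_half" and w: "w \<in> upper_half"
  shows "2 * (Im z * Im w) * ((Re (G z) - Re (G w)) * (Re z - Re w) + (Im (G z) + Im (G w)) * (Im z + Im w))
     \<le> (Im (G z) * Im w + Im z * Im (G w)) * ((Re z - Re w)^2 + (Im z + Im w)^2)"
proof -
  define D0 where "D0 = (Re z - Re w)^2 + (Im z + Im w)^2"
  define N0 where "N0 = Im z * Im w"
  define \<psi> where "\<psi> t = Im (\<phi> t z) * Im (\<phi> t w) * D0 - N0 * ((Re (\<phi> t z) - Re (\<phi> t w))^2 + (Im (\<phi> t z) + Im (\<phi> t w))^2)" for t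
  have "\<psi> t \<ge> 0" if "t \<ge> 0" for t
  proof -
    have "Im z * Im w * (cmod (\<phi> t z - cnj (\<phi> t w)))^2 \<le> Im (\<phi> t z) * Im (\<phi> t w) * (cmod (z - cnj w))^2"
      by (rule schwarz_pick_H[OF hol[OF that] into[OF that] z w])
    then show ?thesis unfolding \<psi>_def D0_def N0_def cmod_power2 by simp
  qed
  moreover have "\<psi> 0 = 0" unfolding \<psi>_def D0_def N0_def using init z w by simp
  moreover have "(\<psi> has_real_derivative
      (Im (G z) * Im w + Im z * Im (G w)) * D0 - N0 * (2 * (Re z - Re w) * (Re (G z) - Re (G w)) + 2 * (Im z + Im w) * (Im (G z) + Im (G w))))
      (at 0 within {0..})"
  proof -
    note dz = der[OF z] and dw = der[OF w]
    note r = Re_vd[OF dz] Re_vd[OF dw] Im_vd[OF dz] Im_vd[OF dw]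
    show ?thesis unfolding \<psi>_def
      by (rule derivative_eq_intros r refl | simp add: init z w)+ (simp add: algebra_simps)
  qed
  ultimately have "0 \<le> (Im (G z) * Im w + Im z * Im (G w)) * D0 - N0 * (2 * (Re z - Re w) * (Re (G z) - Re (G w)) + 2 * (Im z + Im w) * (Im (G z) + Im (G w)))"
    using deriv_nonneg_right by blast
  then show ?thesis unfolding D0_def N0_def by (simp add: algebra_simps)
qed



lemma boundary_limit_ineq:
  fixes P :: "complex \<Rightarrow> complex"
  assumes holP: "P holomorphic_on UNIV" and P0: "Im (P 0) = 0"
    and ineq: "\<And>z w. z \<in> upper_half \<Longrightarrow> w \<in> upper_half \<Longrightarrow>
       2 * (Im z * Im w) * ((Re (P z) - Re (P w)) * (Re z - Re w) + (Im (P z) + Im (P w)) * (Im z + Im w))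
     \<le> (Im (P z) * Im w + Im z * Im (P w)) * ((Re z - Re w)^2 + (Im z + Im w)^2)"
    and z: "z \<in> upper_half"
  shows "2 * Im z * ((Re (P z) - Re (P 0)) * Re z + Im (P z) * Im z)
     \<le> (Im (P z) + Im z * Re (deriv P 0)) * ((Re z)^2 + (Im z)^2)"
proof -
  define q where "q = (\<lambda>e::real. P (of_real e * \<i>))"
  define x where "x = Re z"
  define y where "y = Im z"
  have y: "y > 0" using z by (simp add: upper_half_def y_def)
  have dP: "(P has_field_derivative deriv P 0) (at 0)"
    using holP by (simp add: holomorphic_derivI)
  have dq0: "((\<lambda>e::real. of_real e * \<i>) has_vector_derivative \<i>) (at 0)"
    by (rule derivative_eq_intros refl)+ simp
  have dq: "(q has_vector_derivative (\<i> * deriv P 0)) (at 0)"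
    using field_vector_diff_chain_at[OF dq0, of P] dP by (simp add: q_def o_def)
  have "((\<lambda>e. Im (q e)) has_real_derivative Im (\<i> * deriv P 0)) (at 0)"
    by (rule Im_vd[OF dq])
  then have "((\<lambda>e. (Im (q e) - Im (q 0)) / (e - 0)) \<longlongrightarrow> Re (deriv P 0)) (at 0)"
    unfolding has_field_derivative_iff by simp
  moreover have "Im (q 0) = 0" using P0 by (simp add: q_def)
  ultimately have l1': "((\<lambda>e. Im (q e) / e) \<longlongrightarrow> Re (deriv P 0)) (at 0)"
    by simp
  have l1: "((\<lambda>e. Im (q e) / e) \<longlongrightarrow> Re (deriv P 0)) (at_right 0)"
    by (rule tendsto_mono[OF at_le l1']) simp
  have cq: "isCont q 0"
    using has_vector_derivative_continuous[OF dq] .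
  then have l2': "(q \<longlongrightarrow> q 0) (at 0)" by (simp add: isCont_def)
  have l2: "(q \<longlongrightarrow> P 0) (at_right 0)"
    using tendsto_mono[OF at_le l2'] by (simp add: q_def)
  let ?L = "\<lambda>e. 2 * y * ((Re (P z) - Re (q e)) * x + (Im (P z) + Im (q e)) * (y + e))"
  let ?R = "\<lambda>e. (Im (P z) + y * (Im (q e) / e)) * (x^2 + (y + e)^2)"
  have ev: "eventually (\<lambda>e. ?L e \<le> ?R e) (at_right 0)"
    unfolding eventually_at_filter
  proof (intro always_eventually allI impI)
    fix e :: real assume "e \<noteq> 0" "e \<in> {0<..}"
    then have e: "e > 0" by simp
    have wH: "of_real e * \<i> \<in> upper_half" using e by (simp add: upper_half_def)
    have "2 * (y * e) * ((Re (P z) - Re (q e)) * (x - 0) + (Im (P z) + Im (q e)) * (y + e))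
     \<le> (Im (P z) * e + y * Im (q e)) * ((x - 0)^2 + (y + e)^2)"
      using ineq[OF z wH] by (simp add: q_def x_def y_def)
    moreover have "e * ?L e = 2 * (y * e) * ((Re (P z) - Re (q e)) * (x - 0) + (Im (P z) + Im (q e)) * (y + e))"
      by (simp add: algebra_simps)
    moreover have "e * ?R e = (Im (P z) * e + y * Im (q e)) * ((x - 0)^2 + (y + e)^2)"
      using e by (simp add: field_simps)
    ultimately have "e * ?L e \<le> e * ?R e" by metis
    then show "?L e \<le> ?R e" using e by simp
  qed
  have lL: "(?L \<longlongrightarrow> 2 * y * ((Re (P z) - Re (P 0)) * x + (Im (P z) + Im (P 0)) * (y + 0))) (at_right 0)"
    by (intro tendsto_intros l2 tendsto_ident_at)
  have lR: "(?R \<longlongrightarrow> (Im (P z) + y * Re (deriv P 0)) * (x^2 + (y + 0)^2)) (at_right 0)"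
    by (intro tendsto_intros l1 tendsto_ident_at)
  have "2 * y * ((Re (P z) - Re (P 0)) * x + (Im (P z) + Im (P 0)) * (y + 0)) \<le> (Im (P z) + y * Re (deriv P 0)) * (x^2 + (y + 0)^2)"
    by (rule tendsto_le[OF _ lR lL ev]) simp
  then show ?thesis using P0 by (simp add: x_def y_def)
qed



lemma circle_coeff:
  fixes f :: "complex \<Rightarrow> complex"
  assumes holf: "f holomorphic_on UNIV" and r: "r > 0"
  shows "((\<lambda>t. f (circlepath 0 r t) / (circlepath 0 r t)^k) has_integral ((deriv^^k) f 0 / fact k)) {0..1}"
proof -
  have "((\<lambda>u. f u / (u - 0) ^ (Suc k)) has_contour_integral ((2 * pi * \<i>) / (fact k) * (deriv ^^ k) f 0))
           (circlepath 0 r)"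
    by (rule Cauchy_has_contour_integral_higher_derivative_circlepath)
       (use holf r in \<open>auto intro: holomorphic_on_imp_continuous_on holomorphic_on_subset\<close>)
  then have H: "((\<lambda>t. f (circlepath 0 r t) / (circlepath 0 r t - 0) ^ (Suc k) * vector_derivative (circlepath 0 r) (at t within {0..1}))
            has_integral ((2 * pi * \<i>) / (fact k) * (deriv ^^ k) f 0)) {0..1}"
    unfolding has_contour_integral_def .
  have eq: "f (circlepath 0 r t) / (circlepath 0 r t - 0) ^ (Suc k) * vector_derivative (circlepath 0 r) (at t within {0..1})
     = (2 * pi * \<i>) * (f (circlepath 0 r t) / (circlepath 0 r t)^k)" if "t \<in> {0..1}" for t
  proof -
    have vd: "vector_derivative (circlepath 0 r) (at t within {0..1}) = 2 * pi * \<i> * circlepath 0 r t"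
      using vector_derivative_circlepath01[of t 0 r] that by (simp add: circlepath)
    have nz: "circlepath 0 r t \<noteq> 0" using r by (simp add: circlepath)
    show ?thesis unfolding vd using nz by (simp add: field_simps)
  qed
  have "((\<lambda>t. (2 * pi * \<i>) * (f (circlepath 0 r t) / (circlepath 0 r t)^k)) has_integral ((2 * pi * \<i>) / (fact k) * (deriv ^^ k) f 0)) {0..1}"
    by (rule has_integral_cong[THEN iffD1, OF eq H])
  from has_integral_mult_right[OF this, of "1 / (2 * pi * \<i>)"]
  show ?thesis by (simp add: field_simps)
qed

lemma higher_deriv_real:
  fixes f :: "complex \<Rightarrow> complex"
  assumes holf: "f holomorphic_on UNIV" and fr: "\<And>x. f (of_real x) \<in> \<real>"
  shows "(deriv ^^ n) f (of_real x) \<in> \<real>"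
proof (induction n arbitrary: x)
  case 0 then show ?case using fr by simp
next
  case (Suc n)
  define g where "g = (deriv ^^ n) f"
  have holg: "g holomorphic_on UNIV" unfolding g_def by (intro holomorphic_higher_deriv holf) simp
  have dg: "(g has_field_derivative deriv g (of_real x)) (at (of_real x))"
    using holg by (simp add: holomorphic_derivI)
  have d1: "(of_real has_vector_derivative (1::complex)) (at x)"
    by (rule derivative_eq_intros refl)+ simp
  have "((g \<circ> of_real) has_vector_derivative (1 * deriv g (of_real x))) (at x)"
    by (rule field_vector_diff_chain_at[OF d1]) (use dg in simp)
  then have "((\<lambda>t. (g \<circ> of_real) t) has_vector_derivative (deriv g (of_real x))) (at x)" by (simp add: o_def)
  then have "((\<lambda>t. Im ((g \<circ> of_real) t)) has_real_derivative Im (deriv g (of_real x))) (at x)"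
    by (intro Im_vd) (simp add: o_def)
  moreover have "(\<lambda>t. Im ((g \<circ> of_real) t)) = (\<lambda>t. 0)"
    using Suc.IH by (auto simp: g_def complex_is_Real_iff)
  ultimately have "((\<lambda>t. 0) has_real_derivative Im (deriv g (of_real x))) (at x)" by (simp add: o_def)
  then have "Im (deriv g (of_real x)) = 0"
    using DERIV_const DERIV_unique by blast
  then show ?case by (simp add: g_def complex_is_Real_iff)
qed



lemma circ_props:
  assumes r: "r > 0"
  shows "circlepath 0 r t \<noteq> 0" "cnj (circlepath 0 r t) = of_real (r^2) / circlepath 0 r t"
    "cmod (circlepath 0 r t / of_real r) = 1"
proof -
  have n: "cmod (circlepath 0 r t) = r" using r by (simp add: circlepath norm_mult)
  show nz: "circlepath 0 r t \<noteq> 0" using r by (simp add: circlepath)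
  have "cnj (circlepath 0 r t) * circlepath 0 r t = of_real ((cmod (circlepath 0 r t))^2)"
    by (metis complex_norm_square mult.commute of_real_power)
  then show "cnj (circlepath 0 r t) = of_real (r^2) / circlepath 0 r t"
    using nz n by (simp add: field_simps)
  show "cmod (circlepath 0 r t / of_real r) = 1" using n r by (simp add: norm_divide)
qed

lemma cnjX1:
  fixes g q :: complex and r :: real
  assumes nz: "g \<noteq> 0" and rnz: "r \<noteq> 0" and cg: "cnj g = of_real (r^2) / g"
  shows "cnj g ^ 2 * q * cnj ((g / of_real r)^m) = of_real (r^(m+4)) * (q / g^(m+2))"
proof -
  have a: "cnj ((g / of_real r)^m) = (of_real r / g)^m"
    using nz rnz by (simp add: cg power2_eq_square field_simps)
  have b: "cnj g ^ 2 = of_real (r^4) / g^2" using nz by (simp add: cg power_divide flip: power_mult of_real_power)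
  show ?thesis unfolding a b using nz rnz
    by (simp add: power_divide power_add power2_eq_square field_simps)
qed
lemma cnjX2:
  fixes g q :: complex and r :: real
  assumes nz: "g \<noteq> 0" and rnz: "r \<noteq> 0" and cg: "cnj g = of_real (r^2) / g"
  shows "cnj g ^ 2 * q * (g / of_real r)^Suc k = of_real (r^4 / r^Suc k) * (q * g^(Suc k - 1) / g)"
proof -
  have "cnj g ^ 2 = of_real (r^4) / g^2" using nz by (simp add: cg power_divide flip: power_mult of_real_power)
  then show ?thesis using nz rnz
    by (simp add: power_divide power2_eq_square field_simps)
qed
lemma fourier_integral:
  fixes P :: "complex \<Rightarrow> complex"
  assumes holP: "P holomorphic_on UNIV" and r: "r > 0" and m: "m \<ge> 1"
  defines "Q \<equiv> \<lambda>u. P u - P 0 - deriv P 0 * u"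
  shows "((\<lambda>t. Im (cnj (circlepath 0 r t)^2 * Q (circlepath 0 r t)) * Im ((circlepath 0 r t / of_real r)^m))
     has_integral (r^(m+4) * Re ((deriv^^(m+2)) P 0 / fact (m+2)) / 2)) {0..1}"
proof -
  have holQ: "Q holomorphic_on UNIV" unfolding Q_def by (intro holomorphic_intros holP)
  have "(deriv^^(m+2)) Q 0 = (deriv^^(m+2)) (\<lambda>u. P u - P 0) 0 - (deriv^^(m+2)) (\<lambda>u. deriv P 0 * u) 0"
    unfolding Q_def by (rule higher_deriv_diff[where S=UNIV]) (auto intro: holomorphic_intros holP)
  also have "(deriv^^(m+2)) (\<lambda>u. P u - P 0) 0 = (deriv^^(m+2)) P 0 - (deriv^^(m+2)) (\<lambda>u. P 0) 0"
    by (rule higher_deriv_diff[where S=UNIV]) (auto intro: holomorphic_intros holP)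
  moreover have l: "(deriv^^(m+2)) (\<lambda>u. deriv P 0 * u) 0 = 0" by (simp only: higher_deriv_linear) simp
  moreover have c: "(deriv^^(m+2)) (\<lambda>u. P 0) 0 = 0" by (simp only: higher_deriv_const) simp
  ultimately have dQ: "(deriv^^(m+2)) Q 0 = (deriv^^(m+2)) P 0" by (simp only: diff_zero)
  have A: "((\<lambda>t. Q (circlepath 0 r t) / (circlepath 0 r t)^(m+2)) has_integral ((deriv^^(m+2)) P 0 / fact (m+2))) {0..1}"
    using circle_coeff[OF holQ r, of "m+2"] dQ by simp
  define f where "f u = Q u * u^(m-1)" for u
  have holf: "f holomorphic_on UNIV" unfolding f_def by (intro holomorphic_intros holQ)
  have dP: "(P has_field_derivative deriv P 0) (at 0)" using holP by (simp add: holomorphic_derivI)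
  have dQ0: "(Q has_field_derivative 0) (at 0)"
    unfolding Q_def by (rule derivative_eq_intros dP refl)+ simp
  have df: "(f has_field_derivative 0) (at 0)"
    unfolding f_def by (rule derivative_eq_intros dQ0 refl)+ (simp add: Q_def)
  have B0: "((\<lambda>t. f (circlepath 0 r t) / (circlepath 0 r t)^1) has_integral ((deriv^^1) f 0 / fact 1)) {0..1}"
    by (rule circle_coeff[OF holf r])
  have B: "((\<lambda>t. Q (circlepath 0 r t) * (circlepath 0 r t)^(m-1) / circlepath 0 r t) has_integral 0) {0..1}"
    using B0 DERIV_imp_deriv[OF df] by (simp add: f_def)
  have ReA: "((\<lambda>t. r^(m+4) * Re (Q (circlepath 0 r t) / (circlepath 0 r t)^(m+2))) has_integral
        (r^(m+4) * Re ((deriv^^(m+2)) P 0 / fact (m+2)))) {0..1}"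
    using has_integral_mult_right[OF has_integral_linear[OF A bounded_linear_Re], of "r^(m+4)"] by (simp add: o_def)
  have "((\<lambda>t. Re (Q (circlepath 0 r t) * (circlepath 0 r t)^(m-1) / circlepath 0 r t)) has_integral 0) {0..1}"
    using has_integral_linear[OF B bounded_linear_Re] by (simp add: o_def)
  from has_integral_mult_right[OF this, of "r^4/r^m"]
  have ReB: "((\<lambda>t. r^4 / r^m * Re (Q (circlepath 0 r t) * (circlepath 0 r t)^(m-1) / circlepath 0 r t)) has_integral 0) {0..1}"
    by (simp only: mult_zero_right)
  have AB: "((\<lambda>t. (r^(m+4) * Re (Q (circlepath 0 r t) / (circlepath 0 r t)^(m+2))
      - r^4 / r^m * Re (Q (circlepath 0 r t) * (circlepath 0 r t)^(m-1) / circlepath 0 r t)) / 2) has_integral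
        (r^(m+4) * Re ((deriv^^(m+2)) P 0 / fact (m+2)) / 2)) {0..1}"
    using has_integral_mult_right[OF has_integral_diff[OF ReA ReB], of "1/2"] by simp
  have pt: "Im (cnj (circlepath 0 r t)^2 * Q (circlepath 0 r t)) * Im ((circlepath 0 r t / of_real r)^m)
     = (r^(m+4) * Re (Q (circlepath 0 r t) / (circlepath 0 r t)^(m+2))
      - r^4 / r^m * Re (Q (circlepath 0 r t) * (circlepath 0 r t)^(m-1) / circlepath 0 r t)) / 2" for t
  proof -
    define g where "g = circlepath 0 r t"
    define X where "X = cnj g ^ 2 * Q g"
    define F where "F = (g / of_real r)^m"
    have nz: "g \<noteq> 0" and cg: "cnj g = of_real (r^2) / g" using circ_props[OF r] by (auto simp: g_def)
    have rnz: "(of_real r :: complex) \<noteq> 0" using r by simp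
    have c1: "Im X * Im F = (Re (X * cnj F) - Re (X * F)) / 2" by simp
    have c2: "X * cnj F = of_real (r^(m+4)) * (Q g / g^(m+2))"
      unfolding X_def F_def using cnjX1[OF nz _ cg] r by simp
    obtain k where k: "m = Suc k" using m by (cases m) auto
    have c3: "X * F = of_real (r^4 / r^m) * (Q g * g^(m-1) / g)"
      unfolding X_def F_def k using cnjX2[OF nz _ cg] r by simp
    have ReM: "\<And>a z. Re (complex_of_real a * z) = a * Re z" by simp
    have main: "Im X * Im F = (r^(m+4) * Re (Q g / g^(m+2)) - r^4 / r^m * Re (Q g * g^(m-1) / g)) / 2"
      unfolding c1 c2 c3 ReM ..
    show ?thesis using main unfolding X_def F_def g_def .
  qed
  show ?thesis using AB by (simp only: pt)
qed



lemma im_pow_bound: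
  fixes E :: complex
  assumes "cmod E = 1"
  shows "\<bar>Im (E^m)\<bar> \<le> real m * \<bar>Im E\<bar>"
proof (induction m)
  case 0 then show ?case by simp
next
  case (Suc m)
  have r1: "\<bar>Re E\<bar> \<le> 1" using abs_Re_le_cmod[of E] assms by simp
  have r2: "\<bar>Re (E^m)\<bar> \<le> 1" using abs_Re_le_cmod[of "E^m"] assms by (simp add: norm_power)
  have "Im (E^Suc m) = Re E * Im (E^m) + Im E * Re (E^m)" by simp
  then have "\<bar>Im (E^Suc m)\<bar> \<le> \<bar>Re E\<bar> * \<bar>Im (E^m)\<bar> + \<bar>Im E\<bar> * \<bar>Re (E^m)\<bar>"
    by (simp add: abs_mult[symmetric] abs_triangle_ineq)
  also have "\<dots> \<le> 1 * \<bar>Im (E^m)\<bar> + \<bar>Im E\<bar> * 1"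
    by (intro add_mono mult_mono r1 r2) auto
  also have "\<dots> \<le> real m * \<bar>Im E\<bar> + \<bar>Im E\<bar>" using Suc.IH by simp
  finally show ?case by (simp add: algebra_simps)
qed

lemma coeff_bounds:
  fixes P :: "complex \<Rightarrow> complex"
  assumes holP: "P holomorphic_on UNIV"
  defines "Q \<equiv> \<lambda>u. P u - P 0 - deriv P 0 * u"
  assumes Wpos: "\<And>u. Im u > 0 \<Longrightarrow> 0 \<le> Im (cnj u ^ 2 * Q u)"
    and Wneg: "\<And>u. Im u < 0 \<Longrightarrow> Im (cnj u ^ 2 * Q u) \<le> 0"
  shows "0 \<le> Re ((deriv^^3) P 0 / fact 3)"
    and "m \<ge> 2 \<Longrightarrow> Re ((deriv^^(m+2)) P 0 / fact (m+2)) = 0"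
proof -
  define a where "a k = Re ((deriv^^k) P 0 / fact k)" for k
  define V where "V r t = Im (cnj (circlepath 0 r t)^2 * Q (circlepath 0 r t))" for r t
  define S where "S r j t = Im ((circlepath 0 r t / of_real r)^j)" for r j t
  have int: "((\<lambda>t. V r t * S r j t) has_integral (r^(j+4) * a (j+2) / 2)) {0..1}" if "r > 0" "j \<ge> 1" for r j
    using fourier_integral[OF holP that] unfolding V_def S_def a_def Q_def .
  have VS1: "V r t * S r 1 t \<ge> 0" if r: "r > 0" for r t
  proof -
    have S1: "S r 1 t = Im (circlepath 0 r t) / r" unfolding S_def by (simp add: Im_divide_of_real)
    consider "Im (circlepath 0 r t) > 0" | "Im (circlepath 0 r t) < 0" | "Im (circlepath 0 r t) = 0" by linarith
    then show ?thesis
    proof cases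
      case 1
      then have "V r t \<ge> 0" "S r 1 t \<ge> 0" using Wpos r unfolding V_def S1 by auto
      then show ?thesis by simp
    next
      case 2
      then have "V r t \<le> 0" "S r 1 t \<le> 0" using Wneg r unfolding V_def S1
        by (auto simp: divide_nonpos_pos)
      then show ?thesis by (simp add: mult_nonpos_nonpos)
    next
      case 3
      then show ?thesis unfolding S1 by simp
    qed
  qed
  have VSm: "\<bar>V r t * S r j t\<bar> \<le> real j * (V r t * S r 1 t)" if r: "r > 0" for r t j
  proof -
    have "\<bar>S r j t\<bar> \<le> real j * \<bar>S r 1 t\<bar>"
      unfolding S_def using im_pow_bound[OF circ_props(3)[OF r]] by simp
    then have "\<bar>V r t\<bar> * \<bar>S r j t\<bar> \<le> \<bar>V r t\<bar> * (real j * \<bar>S r 1 t\<bar>)"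
      by (intro mult_left_mono) auto
    also have "\<dots> = real j * \<bar>V r t * S r 1 t\<bar>" by (simp add: abs_mult)
    also have "\<dots> = real j * (V r t * S r 1 t)" using VS1[OF r] by simp
    finally show ?thesis by (simp add: abs_mult)
  qed
  have a3: "0 \<le> a 3"
  proof -
    have "0 \<le> 1^(1+4) * a (1+2) / 2"
      by (rule has_integral_le[OF has_integral_0 int]) (auto, metis VS1 zero_less_one One_nat_def)
    then show ?thesis by (simp add: numeral_3_eq_3)
  qed
  then show "0 \<le> Re ((deriv^^3) P 0 / fact 3)" by (simp add: a_def)
  assume m: "m \<ge> 2"
  have bound: "\<bar>a (m+2)\<bar> * r^(m-1) \<le> real m * a 3" if r: "r > 0" for r
  proof -
    have i1: "((\<lambda>t. real m * (V r t * S r 1 t)) has_integral (real m * (r^(1+4) * a (1+2) / 2))) {0..1}"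
      by (rule has_integral_mult_right[OF int[OF r]]) simp
    have im: "((\<lambda>t. V r t * S r m t) has_integral (r^(m+4) * a (m+2) / 2)) {0..1}"
      by (rule int[OF r]) (use m in simp)
    have u: "r^(m+4) * a (m+2) / 2 \<le> real m * (r^(1+4) * a (1+2) / 2)"
      by (rule has_integral_le[OF im i1]) (use VSm[OF r, of _ m] in \<open>blast dest: abs_le_D1\<close>)
    have l: "- (r^(m+4) * a (m+2) / 2) \<le> real m * (r^(1+4) * a (1+2) / 2)"
      by (rule has_integral_le[OF has_integral_neg[OF im] i1]) (use VSm[OF r, of _ m] in \<open>blast dest: abs_le_D2\<close>)
    have "\<bar>r^(m+4) * a (m+2) / 2\<bar> \<le> real m * (r^(1+4) * a (1+2) / 2)"
      using u l by (rule abs_leI)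
    then have "\<bar>a (m+2)\<bar> * r^(m+4) \<le> real m * a 3 * r^5"
      using r by (simp add: abs_mult abs_divide numeral_3_eq_3 algebra_simps)
    moreover have "r^(m+4) = r^(m-1) * r^5" using m by (simp flip: power_add add: add.commute)
    ultimately have "(\<bar>a (m+2)\<bar> * r^(m-1)) * r^5 \<le> (real m * a 3) * r^5" by (simp add: algebra_simps)
    then show ?thesis using r by simp
  qed
  show "Re ((deriv^^(m+2)) P 0 / fact (m+2)) = 0"
  proof (rule ccontr)
    assume "Re ((deriv^^(m+2)) P 0 / fact (m+2)) \<noteq> 0"
    then have ap: "\<bar>a (m+2)\<bar> > 0" by (simp add: a_def)
    define r where "r = (real m * a 3 + 1) / \<bar>a (m+2)\<bar> + 1"
    have r1: "r \<ge> 1" using a3 ap by (simp add: r_def)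
    have "r^1 \<le> r^(m-1)" using r1 m by (intro power_increasing) auto
    then have "r \<le> r^(m-1)" by simp
    then have "\<bar>a (m+2)\<bar> * r \<le> \<bar>a (m+2)\<bar> * r^(m-1)" using ap by simp
    also have "\<dots> \<le> real m * a 3" using bound r1 by simp
    finally have "\<bar>a (m+2)\<bar> * r \<le> real m * a 3" .
    moreover have "\<bar>a (m+2)\<bar> * r = real m * a 3 + 1 + \<bar>a (m+2)\<bar>"
      using ap by (simp add: r_def field_simps)
    ultimately show False using ap by linarith
  qed
qed



lemma inv_H: "w \<in> upper_half \<Longrightarrow> - 1 / w \<in> upper_half"
  by (simp add: upper_half_def Im_divide divide_pos_pos sum_power2_gt_zero_iff
       del: divide_minus_left)

lemma build_P:
  fixes \<delta> :: "complex \<Rightarrow> complex"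
  assumes hte: "holo_tangent_except_0 \<delta>"
  shows "\<exists>P. P holomorphic_on UNIV \<and> (\<forall>x. P (of_real x) \<in> \<real>) \<and> (\<forall>w\<in>upper_half. P w = w^2 * \<delta> (-1/w))"
proof -
  obtain U f where U: "open U" "{z. Im z \<ge> 0} - {0} \<subseteq> U" and holf: "f holomorphic_on U"
    and fd: "\<forall>z\<in>upper_half. f z = \<delta> z" and fr: "\<forall>x::real. x \<noteq> 0 \<longrightarrow> f (complex_of_real x) \<in> \<real>"
    using hte unfolding holo_tangent_except_0_def by blast
  obtain r h where r: "r > 0" and holh: "h holomorphic_on ball 0 r"
    and hd: "\<forall>w\<in>ball 0 r. Im w > 0 \<longrightarrow> h w = w\<^sup>2 * \<delta> (- 1 / w)"
    and hr: "\<forall>x::real. \<bar>x\<bar> < r \<longrightarrow> h (complex_of_real x) \<in> \<real>"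
    using hte unfolding holo_tangent_except_0_def by blast
  define S where "S = - {0::complex}"
  define g where "g = (\<lambda>z. if 0 \<le> Im z then f z else cnj (f (cnj z)))"
  have openS: "open S" unfolding S_def by (simp add: open_Compl)
  have sub1: "S \<inter> {z. 0 \<le> Im z} \<subseteq> U" using U by (auto simp: S_def)
  have holg: "g holomorphic_on S"
    unfolding g_def
  proof (rule Schwarz_reflection[OF openS])
    show "cnj ` S \<subseteq> S" by (auto simp: S_def)
    show "f holomorphic_on S \<inter> {z. 0 < Im z}" using holf by (rule holomorphic_on_subset) (use sub1 in auto)
    show "continuous_on (S \<inter> {z. 0 \<le> Im z}) f"
      using holomorphic_on_imp_continuous_on[OF holf] sub1 by (rule continuous_on_subset)
    show "f z \<in> \<real>" if "z \<in> S" "z \<in> \<real>" for z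
      using that fr by (auto simp: S_def elim!: Reals_cases)
  qed
  define k where "k w = w^2 * g (-1/w)" for w
  have holk: "k holomorphic_on S"
  proof -
    have "(\<lambda>w. -1/w) holomorphic_on S" by (intro holomorphic_intros) (auto simp: S_def)
    moreover have "(\<lambda>w. -1/w) ` S \<subseteq> S" by (auto simp: S_def)
    ultimately have "(g \<circ> (\<lambda>w. -1/w)) holomorphic_on S"
      by (intro holomorphic_on_compose_gen[OF _ holg]) auto
    then show ?thesis unfolding k_def by (intro holomorphic_intros) (auto simp: o_def)
  qed
  have kH: "k w = w^2 * \<delta> (-1/w)" if "w \<in> upper_half" for w
  proof -
    have "-1/w \<in> upper_half" using inv_H[OF that] by simp
    then show ?thesis using fd by (auto simp: k_def g_def upper_half_def)
  qed
  have kh: "k w = h w" if "w \<in> ball 0 r - {0}" for w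
  proof (rule analytic_continuation_open[where s="ball 0 r \<inter> upper_half" and s'="ball 0 r - {0}" and f=k and g=h])
    show "open (ball 0 r \<inter> upper_half)" by (auto simp: upper_half_def intro: open_Int open_halfspace_Im_gt)
    show "open (ball 0 r - {0::complex})" by auto
    have "\<i> * of_real (r/2) \<in> ball 0 r \<inter> upper_half" using r by (auto simp: upper_half_def norm_mult)
    then show "ball 0 r \<inter> upper_half \<noteq> {}" by blast
    show "connected (ball 0 r - {0::complex})" by (rule connected_punctured_ball) simp
    show "ball 0 r \<inter> upper_half \<subseteq> ball 0 r - {0}" by (auto simp: upper_half_def)
    show "k holomorphic_on ball 0 r - {0}" using holk by (rule holomorphic_on_subset) (auto simp: S_def)
    show "h holomorphic_on ball 0 r - {0}" using holh by (rule holomorphic_on_subset) auto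
    show "k z = h z" if "z \<in> ball 0 r \<inter> upper_half" for z
      using that kH hd by (auto simp: upper_half_def)
  qed (use that in auto)
  define P where "P w = (if w = 0 then h 0 else k w)" for w
  have "P holomorphic_on (ball 0 r \<union> S)"
  proof (rule holomorphic_on_Un)
    show "P holomorphic_on ball 0 r"
      using holh by (rule holomorphic_transform) (auto simp: P_def kh)
    show "P holomorphic_on S"
      using holk by (rule holomorphic_transform) (auto simp: P_def S_def)
  qed (auto simp: openS)
  moreover have "ball 0 r \<union> S = UNIV" using r by (auto simp: S_def)
  ultimately have holP: "P holomorphic_on UNIV" by simp
  have Pr: "P (of_real x) \<in> \<real>" for x
  proof (cases "x = 0")
    case True then show ?thesis using hr[rule_format, of 0] r by (simp add: P_def)
  next
    case False
    have "-1 / complex_of_real x = of_real (-1/x)" by simp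
    then have "g (-1 / complex_of_real x) = f (of_real (-1/x))" by (simp add: g_def)
    moreover have "f (of_real (-1/x)) \<in> \<real>" using False fr[rule_format, of "-1/x"] by (simp del: divide_minus_left of_real_minus of_real_divide)
    ultimately have "g (-1 / complex_of_real x) \<in> \<real>" by simp
    then show ?thesis using False by (simp add: P_def k_def del: divide_minus_left)
  qed
  have PH: "P w = w^2 * \<delta> (-1/w)" if "w \<in> upper_half" for w
    using that kH by (auto simp: P_def upper_half_def)
  show ?thesis using holP Pr PH by blast
qed



lemma W_id:
  fixes u pu :: complex and p0 c1 :: real
  shows "Im (cnj u ^ 2 * (pu - of_real p0 - of_real c1 * u)) =
     (Im pu + Im u * c1) * ((Re u)^2 + (Im u)^2) - 2 * Im u * ((Re pu - p0) * Re u + Im pu * Im u)"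
  by (simp add: power2_eq_square algebra_simps)

lemma real_sym:
  fixes P :: "complex \<Rightarrow> complex"
  assumes holP: "P holomorphic_on UNIV" and Pr: "\<And>x. P (of_real x) \<in> \<real>"
  shows "P (cnj z) = cnj (P z)"
proof -
  have cr: "cnj ((deriv^^n) P 0) = (deriv^^n) P 0" for n
    using higher_deriv_real[OF holP Pr, of n 0] by (simp add: Reals_cnj_iff)
  have s1: "(\<lambda>n. (deriv^^n) P 0 / fact n * (z - 0)^n) sums P z"
    by (rule holomorphic_power_series[of P 0 "cmod z + 1"]) (use holP in \<open>auto intro: holomorphic_on_subset\<close>)
  have s2: "(\<lambda>n. (deriv^^n) P 0 / fact n * (cnj z - 0)^n) sums P (cnj z)"
    by (rule holomorphic_power_series[of P 0 "cmod z + 1"]) (use holP in \<open>auto intro: holomorphic_on_subset\<close>)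
  have "(\<lambda>n. cnj ((deriv^^n) P 0 / fact n * (z - 0)^n)) sums cnj (P z)"
    using s1 by (simp only: sums_cnj)
  then have "(\<lambda>n. (deriv^^n) P 0 / fact n * (cnj z - 0)^n) sums cnj (P z)"
    by (simp add: cr)
  then show ?thesis using s2 sums_unique2 by blast
qed

lemma ell_vals: "ell (-2) z = inverse z" "ell (-1) z = 1" "ell 0 z = z" "ell 1 z = z^2"
  by (simp_all add: ell_def power_int_minus)

lemma forward:
  fixes \<delta> :: "complex \<Rightarrow> complex"
  assumes sc: "semicomplete_H \<delta>" and hte: "holo_tangent_except_0 \<delta>"
  shows "\<exists>d2 d1 d0 d1' :: real. d2 \<le> 0 \<and>
       (\<forall>z\<in>upper_half. \<delta> z = of_real d2 * ell (-2) z + of_real d1 * ell (-1) z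
                          + of_real d0 * ell 0 z + of_real d1' * ell 1 z)"
proof -
  obtain P where holP: "P holomorphic_on UNIV" and Pr: "\<And>x. P (of_real x) \<in> \<real>"
    and PH: "\<And>w. w \<in> upper_half \<Longrightarrow> P w = w^2 * \<delta> (-1/w)"
    using build_P[OF hte] by blast
  have cre: "(deriv^^k) P 0 \<in> \<real>" for k
    using higher_deriv_real[OF holP Pr, of k 0] by simp
  obtain F :: "real \<Rightarrow> complex \<Rightarrow> complex" where
    F1: "\<And>z. z \<in> upper_half \<Longrightarrow> F 0 z = z"
    and F2: "\<And>z t. z \<in> upper_half \<Longrightarrow> t \<ge> 0 \<Longrightarrow> ((\<lambda>s. F s z) has_vector_derivative \<delta> (F t z)) (at t within {0..})"
    and F3: "\<And>t. t \<ge> 0 \<Longrightarrow> F t holomorphic_on upper_half"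
    and F4: "\<And>t. t \<ge> 0 \<Longrightarrow> F t ` upper_half \<subseteq> upper_half"
    using sc unfolding semicomplete_H_def by blast
  define \<phi> where "\<phi> t w = - 1 / F t (- 1 / w)" for t w
  have nzH: "u \<noteq> 0" if "u \<in> upper_half" for u using that by (auto simp: upper_half_def)
  have holphi: "\<phi> t holomorphic_on upper_half" if t: "t \<ge> 0" for t
  proof -
    have h1: "(\<lambda>w. - 1 / w) holomorphic_on upper_half" by (intro holomorphic_intros) (use nzH in auto)
    have "(F t \<circ> (\<lambda>w. - 1 / w)) holomorphic_on upper_half"
      by (rule holomorphic_on_compose_gen[OF h1 F3[OF t]]) (use inv_H in auto)
    moreover have "(\<lambda>u. - 1 / u) holomorphic_on upper_half" by (intro holomorphic_intros) (use nzH in auto)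
    ultimately have "((\<lambda>u. - 1 / u) \<circ> (F t \<circ> (\<lambda>w. - 1 / w))) holomorphic_on upper_half"
      by (rule holomorphic_on_compose_gen) (use inv_H F4[OF t] in auto)
    then show ?thesis by (simp add: \<phi>_def[abs_def] o_def)
  qed
  have intophi: "\<phi> t ` upper_half \<subseteq> upper_half" if t: "t \<ge> 0" for t
    using inv_H F4[OF t] unfolding \<phi>_def by auto
  have initphi: "\<phi> 0 w = w" if "w \<in> upper_half" for w
    using F1[OF inv_H[OF that]] nzH[OF that] by (simp add: \<phi>_def)
  have derphi: "((\<lambda>t. \<phi> t w) has_vector_derivative P w) (at 0 within {0..})" if w: "w \<in> upper_half" for w
  proof -
    define z where "z = - 1 / w"
    have zH: "z \<in> upper_half" using inv_H[OF w] by (simp add: z_def)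
    have dF: "((\<lambda>s. F s z) has_vector_derivative \<delta> z) (at 0 within {0..})"
      using F2[OF zH, of 0] F1[OF zH] by simp
    have dg: "((\<lambda>u. - 1 / u) has_field_derivative (1 / z^2)) (at ((\<lambda>s. F s z) 0) within (\<lambda>s. F s z) ` {0..})"
      using F1[OF zH] nzH[OF zH]
      by (auto intro!: derivative_eq_intros simp: power2_eq_square field_simps)
    have "(((\<lambda>u. - 1 / u) \<circ> (\<lambda>s. F s z)) has_vector_derivative (\<delta> z * (1 / z^2))) (at 0 within {0..})"
      by (rule field_vector_diff_chain_within[OF dF dg])
    moreover have "\<delta> z * (1 / z^2) = P w"
      using PH[OF w] nzH[OF w] by (simp add: z_def power2_eq_square field_simps)
    ultimately show ?thesis by (simp add: \<phi>_def o_def z_def)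
  qed
  have ineq: "\<And>z w. z \<in> upper_half \<Longrightarrow> w \<in> upper_half \<Longrightarrow>
       2 * (Im z * Im w) * ((Re (P z) - Re (P w)) * (Re z - Re w) + (Im (P z) + Im (P w)) * (Im z + Im w))
     \<le> (Im (P z) * Im w + Im z * Im (P w)) * ((Re z - Re w)^2 + (Im z + Im w)^2)"
    by (rule generator_ineq[of \<phi> P]) (use holphi intophi initphi derphi in auto)
  have P0r: "Im (P 0) = 0" using Pr[of 0] by (simp add: complex_is_Real_iff)
  have d0r: "deriv P 0 = of_real (Re (deriv P 0))"
    using cre[of 1] by (simp add: complex_is_Real_iff complex_eq_iff)
  have p0r: "P 0 = of_real (Re (P 0))" using P0r by (simp add: complex_eq_iff)
  define Q where "Q u = P u - P 0 - deriv P 0 * u" for u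
  have Wpos: "0 \<le> Im (cnj u ^ 2 * Q u)" if u: "Im u > 0" for u
  proof -
    have uH: "u \<in> upper_half" using u by (simp add: upper_half_def)
    have "Im (cnj u ^ 2 * Q u) = (Im (P u) + Im u * Re (deriv P 0)) * ((Re u)^2 + (Im u)^2)
       - 2 * Im u * ((Re (P u) - Re (P 0)) * Re u + Im (P u) * Im u)"
      unfolding Q_def by (subst p0r, subst d0r, rule W_id)
    then show ?thesis using boundary_limit_ineq[OF holP P0r ineq uH] by simp
  qed
  have symP: "P (cnj u) = cnj (P u)" for u by (rule real_sym[OF holP Pr])
  have Wneg: "Im (cnj u ^ 2 * Q u) \<le> 0" if u: "Im u < 0" for u
  proof -
    have "Q (cnj u) = cnj (Q u)"
      unfolding Q_def symP by (subst (1 2) p0r, subst (1 2) d0r) simp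
    then have "0 \<le> Im (u ^ 2 * cnj (Q u))" using Wpos[of "cnj u"] u by simp
    moreover have e: "cnj u ^ 2 * Q u = cnj (u ^ 2 * cnj (Q u))" by simp
    moreover have i: "\<And>x. Im (cnj x) = - Im x" by simp
    ultimately show ?thesis by (simp only: e i)
  qed
  have Wpos': "\<And>u. Im u > 0 \<Longrightarrow> 0 \<le> Im (cnj u ^ 2 * (P u - P 0 - deriv P 0 * u))"
    using Wpos unfolding Q_def .
  have Wneg': "\<And>u. Im u < 0 \<Longrightarrow> Im (cnj u ^ 2 * (P u - P 0 - deriv P 0 * u)) \<le> 0"
    using Wneg unfolding Q_def .
  have cb1: "0 \<le> Re ((deriv^^3) P 0 / fact 3)"
    using coeff_bounds(1)[OF holP] Wpos' Wneg' by blast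
  have cb2: "Re ((deriv^^(m+2)) P 0 / fact (m+2)) = 0" if "m \<ge> 2" for m
    using coeff_bounds(2)[OF holP _ _ that] Wpos' Wneg' by blast
  define c where "c k = (deriv^^k) P 0 / fact k" for k
  have cR: "c k = of_real (Re (c k))" for k
  proof -
    have "c k \<in> \<real>" unfolding c_def by (rule Reals_divide[OF cre]) (metis Reals_of_nat of_nat_fact)
    then show ?thesis by (simp add: complex_is_Real_iff complex_eq_iff)
  qed
  have c0: "c k = 0" if k4: "k \<ge> 4" for k
  proof -
    have k2: "2 \<le> k - 2" using k4 by arith
    have "Re (c ((k-2)+2)) = 0" unfolding c_def by (rule cb2[OF k2])
    moreover have "(k-2)+2 = k" using k4 by arith
    ultimately have "Re (c k) = 0" by simp
    then show ?thesis using cR[of k] by simp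
  qed
  have Pform: "P w = c 0 + c 1 * w + c 2 * w^2 + c 3 * w^3" for w
  proof -
    have s1: "(\<lambda>n. c n * (w - 0)^n) sums P w" unfolding c_def
      by (rule holomorphic_power_series[of P 0 "cmod w + 1"]) (use holP in \<open>auto intro: holomorphic_on_subset\<close>)
    have s2: "(\<lambda>n. c n * (w - 0)^n) sums (\<Sum>n\<in>{..<4}. c n * (w - 0)^n)"
      by (rule sums_finite) (auto simp: c0)
    have "P w = (\<Sum>n\<in>{..<4}. c n * (w - 0)^n)" using s1 s2 sums_unique2 by blast
    then show ?thesis by (simp add: numeral_eq_Suc power2_eq_square power3_eq_cube lessThan_Suc)
  qed
  have c3: "0 \<le> Re (c 3)" using cb1 by (simp add: c_def)
  show ?thesis
  proof (intro exI conjI ballI)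
    show "- Re (c 3) \<le> 0" using c3 by simp
    fix z assume z: "z \<in> upper_half"
    define w where "w = - 1 / z"
    have wH: "w \<in> upper_half" using inv_H[OF z] by (simp add: w_def)
    have znz: "z \<noteq> 0" using nzH[OF z] .
    have mw: "- 1 / w = z" using znz by (simp add: w_def)
    have "P w = w^2 * \<delta> z" using PH[OF wH] mw by simp
    then have "\<delta> z = z^2 * P w" using znz by (simp add: w_def power2_eq_square field_simps)
    also have "\<dots> = c 0 * z^2 - c 1 * z + c 2 - c 3 * inverse z"
      unfolding Pform w_def using znz by (simp add: power2_eq_square power3_eq_cube field_simps)
    finally show "\<delta> z = of_real (- Re (c 3)) * ell (-2) z + of_real (Re (c 2)) * ell (-1) z
        + of_real (- Re (c 1)) * ell 0 z + of_real (Re (c 0)) * ell 1 z"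
      unfolding ell_vals by (subst (asm) (1 2 3 4) cR) (simp add: algebra_simps)
  qed
qed



lemma ell_vals': "ell (-2) z = inverse z" "ell (-1) z = 1" "ell 0 z = z" "ell 1 z = z^2"
  by (simp_all add: ell_def power_int_minus)

lemma backward:
  fixes \<delta> :: "complex \<Rightarrow> complex" and d2 d1 d0 d1' :: real
  assumes form: "\<forall>z\<in>upper_half. \<delta> z = of_real d2 * ell (-2) z + of_real d1 * ell (-1) z
                          + of_real d0 * ell 0 z + of_real d1' * ell 1 z"
  shows "holo_tangent_except_0 \<delta>"
  unfolding holo_tangent_except_0_def
proof (intro conjI)
  define f where "f z = of_real d2 / z + of_real d1 + of_real d0 * z + of_real d1' * z^2" for z :: complex
  have fd: "\<delta> z = f z" if "z \<in> upper_half" for z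
    using form that by (simp add: ell_vals' f_def divide_inverse)
  show "\<exists>U f. open U \<and> {z. 0 \<le> Im z} - {0} \<subseteq> U \<and> f holomorphic_on U \<and> (\<forall>z\<in>upper_half. f z = \<delta> z) \<and>
        (\<forall>x::real. x \<noteq> 0 \<longrightarrow> f (complex_of_real x) \<in> \<real>)"
  proof (intro exI conjI)
    show "open (- {0::complex})" by (simp add: open_Compl)
    show "{z. 0 \<le> Im z} - {0} \<subseteq> - {0::complex}" by auto
    show "f holomorphic_on - {0}" unfolding f_def by (intro holomorphic_intros) auto
    show "\<forall>z\<in>upper_half. f z = \<delta> z" using fd by simp
    show "\<forall>x::real. x \<noteq> 0 \<longrightarrow> f (complex_of_real x) \<in> \<real>"
      unfolding f_def by (auto intro!: Reals_add Reals_mult Reals_divide Reals_power)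
  qed
  define h where "h w = - of_real d2 * w^3 + of_real d1 * w^2 - of_real d0 * w + of_real d1'" for w :: complex
  show "\<exists>r>0. \<exists>h. h holomorphic_on ball 0 r \<and> (\<forall>w\<in>ball 0 r. Im w > 0 \<longrightarrow> h w = w\<^sup>2 * \<delta> (- 1 / w)) \<and>
        (\<forall>x::real. \<bar>x\<bar> < r \<longrightarrow> h (complex_of_real x) \<in> \<real>)"
  proof (intro exI conjI)
    show "(1::real) > 0" by simp
    show "h holomorphic_on ball 0 1" unfolding h_def by (intro holomorphic_intros)
    show "\<forall>w\<in>ball 0 1. Im w > 0 \<longrightarrow> h w = w\<^sup>2 * \<delta> (- 1 / w)"
    proof (intro ballI impI)
      fix w :: complex assume "Im w > 0"
      then have wH: "w \<in> upper_half" and wnz: "w \<noteq> 0" by (auto simp: upper_half_def)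
      have "\<delta> (- 1 / w) = f (- 1 / w)" using fd inv_H[OF wH] by blast
      then show "h w = w\<^sup>2 * \<delta> (- 1 / w)" using wnz
        by (simp add: h_def f_def power2_eq_square power3_eq_cube field_simps)
    qed
    show "\<forall>x::real. \<bar>x\<bar> < 1 \<longrightarrow> h (complex_of_real x) \<in> \<real>"
      unfolding h_def by (auto intro!: Reals_add Reals_mult Reals_diff Reals_minus Reals_power)
  qed
qed


theorem mainTheorem1:
  fixes \<delta> :: "complex \<Rightarrow> complex"
  assumes "\<delta> holomorphic_on upper_half"
    and "semicomplete_H \<delta>"
  shows "holo_tangent_except_0 \<delta> \<longleftrightarrow>
    (\<exists>d2 d1 d0 d1' :: real. d2 \<le> 0 \<and>
       (\<forall>z\<in>upper_half. \<delta> z = of_real d2 * ell (-2) z + of_real d1 * ell (-1) z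
                          + of_real d0 * ell 0 z + of_real d1' * ell 1 z))"
proof
  assume "holo_tangent_except_0 \<delta>"
  then show "\<exists>d2 d1 d0 d1' :: real. d2 \<le> 0 \<and>
       (\<forall>z\<in>upper_half. \<delta> z = of_real d2 * ell (-2) z + of_real d1 * ell (-1) z
                          + of_real d0 * ell 0 z + of_real d1' * ell 1 z)"
    using forward[OF assms(2)] by blast
next
  assume "\<exists>d2 d1 d0 d1' :: real. d2 \<le> 0 \<and>
       (\<forall>z\<in>upper_half. \<delta> z = of_real d2 * ell (-2) z + of_real d1 * ell (-1) z
                          + of_real d0 * ell 0 z + of_real d1' * ell 1 z)"
  then obtain d2 d1 d0 d1' :: real where
    "\<forall>z\<in>upper_half. \<delta> z = of_real d2 * ell (-2) z + of_real d1 * ell (-1) z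
                          + of_real d0 * ell 0 z + of_real d1' * ell 1 z" by blast
  then show "holo_tangent_except_0 \<delta>" by (rule backward)
qed

end
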